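(* Let $f_1,\dots,f_k \in \mathbb{K}[\bm{x}]$ be multihomogeneous polynomials, let $\bm{d} \in \mathbb{Z}^r$ and let $<$ be a monomial order. If $[H_1^s]_{\bm{d}} = 0$ for all $s \leq k$, then the Macaulay matrix $\mathcal{M}^k_{\bm{d}}$ (the output of the algorithm $\texttt{M}_3\texttt{H}(\{f_1,\dots,f_k\},\bm{d},<)$ described below) is full-rank.
   Context: $\mathbb{K}$ is a field of characteristic 0. For $n_1,\dots,n_r \in \mathbb{N}$, $\mathbb{K}[\bm{x}] := \bigotimes_{i=1}^r \mathbb{K}[x_{i,0},\dots,x_{i,n_i}]$ is the multihomogeneous $\mathbb{K}$-algebra multigraded by $\mathbb{Z}^r$, with $\mathbb{K}[\bm{x}]_{\bm{d}} := \bigotimes_{i=1}^r \mathbb{K}[x_{i,0},\dots,x_{i,n_i}]_{d_i}$; for a module $\mathrm{M}$, $[\mathrm{M}]_{\bm{d}}$ denotes its graded part of multidegree $\bm{d}$. For $s \le k$, $H_1^s := H_1(\mathcal{K}_\bullet(f_1,\dots,f_s;\mathbb{K}[\bm{x}]))$ is the first homology module of the Koszul complex of $f_1,\dots,f_s$ over $\mathbb{K}[\bm{x}]$. A Macaulay matrix is a matrix whose columns are indexed by monomials and whose rows are indexed by polynomials, the entry at (monomial $m$, polynomial $f$) being the coefficient of $m$ in $f$. The matrix $\mathcal{M}^k_{\bm{d}} = \texttt{M}_3\texttt{H}(\{f_1,\dots,f_k\},\bm{d},<)$ is defined recursively: if $k=1$, start with the Macaulay matrix with columns indexed by the monomials of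 $\mathbb{K}[\bm{x}]_{\bm{d}}$ in decreasing order w.r.t. $<$ and no rows, and set $\mathfrak{L}=\emptyset$; if $k>1$, start with $\mathcal{M}^{k-1}_{\bm{d}} = \texttt{M}_3\texttt{H}(\{f_1,\dots,f_{k-1}\},\bm{d},<)$ and let $\mathfrak{L}$ be the set of leading monomials of the rows of the Gaussian elimination of $\texttt{M}_3\texttt{H}(\{f_1,\dots,f_{k-1}\},\bm{d}-\deg(f_k),<)$. Then, for every monomial $\bm{x}^\beta \in \mathbb{K}[\bm{x}]_{\bm{d}-\deg(f_k)}$ with $\bm{x}^\beta \notin \mathfrak{L}$, add the row $\bm{x}^\beta \cdot f_k$. *)

theory Defs
  imports "HOL-Library.Poly_Mapping" "Jordan_Normal_Form.Gauss_Jordan_Elimination"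
          "Jordan_Normal_Form.DL_Rank"
begin

(* Variables x_{i,j} are encoded as pairs (i,j) with i < r and j \<le> n i. *)
type_synonym mono = "(nat \<times> nat) \<Rightarrow>\<^sub>0 nat"
type_synonym 'a mpoly = "mono \<Rightarrow>\<^sub>0 'a"

definition vars :: "(nat \<Rightarrow> nat) \<Rightarrow> nat \<Rightarrow> (nat \<times> nat) set" where
  "vars n r = {(i, j). i < r \<and> j \<le> n i}"

definition is_mono :: "(nat \<Rightarrow> nat) \<Rightarrow> nat \<Rightarrow> mono \<Rightarrow> bool" where
  "is_mono n r m \<longleftrightarrow> Poly_Mapping.keys m \<subseteq> vars n r"

(* multidegree of a monomial, a vector in Z^r (only indices i < r matter) *)
definition mdeg :: "(nat \<Rightarrow> nat) \<Rightarrow> mono \<Rightarrow> nat \<Rightarrow> int" where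
  "mdeg n m i = int (\<Sum>j\<le>n i. Poly_Mapping.lookup m (i, j))"

definition Mon :: "(nat \<Rightarrow> nat) \<Rightarrow> nat \<Rightarrow> (nat \<Rightarrow> int) \<Rightarrow> mono set" where
  "Mon n r e = {m. is_mono n r m \<and> (\<forall>i<r. mdeg n m i = e i)}"

definition homog :: "(nat \<Rightarrow> nat) \<Rightarrow> nat \<Rightarrow> (nat \<Rightarrow> int) \<Rightarrow> 'a::zero mpoly \<Rightarrow> bool" where
  "homog n r e p \<longleftrightarrow> Poly_Mapping.keys p \<subseteq> Mon n r e"

definition monomial_order :: "(nat \<Rightarrow> nat) \<Rightarrow> nat \<Rightarrow> (mono \<Rightarrow> mono \<Rightarrow> bool) \<Rightarrow> bool" where
  "monomial_order n r lt \<longleftrightarrow>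
     (\<forall>a. is_mono n r a \<longrightarrow> \<not> lt a a) \<and>
     (\<forall>a b c. is_mono n r a \<longrightarrow> is_mono n r b \<longrightarrow> is_mono n r c \<longrightarrow> lt a b \<longrightarrow> lt b c \<longrightarrow> lt a c) \<and>
     (\<forall>a b. is_mono n r a \<longrightarrow> is_mono n r b \<longrightarrow> a \<noteq> b \<longrightarrow> lt a b \<or> lt b a) \<and>
     (\<forall>a b c. is_mono n r a \<longrightarrow> is_mono n r b \<longrightarrow> is_mono n r c \<longrightarrow> lt a b \<longrightarrow> lt (a + c) (b + c)) \<and>
     (\<forall>a. is_mono n r a \<longrightarrow> a \<noteq> 0 \<longrightarrow> lt 0 a)"

definition dec_list :: "(mono \<Rightarrow> mono \<Rightarrow> bool) \<Rightarrow> mono set \<Rightarrow> mono list" where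
  "dec_list lt S = (THE xs. set xs = S \<and> sorted_wrt (\<lambda>a b. lt b a) xs)"

definition macaulay :: "mono list \<Rightarrow> 'a::field mpoly list \<Rightarrow> 'a mat" where
  "macaulay ms ps = mat (length ps) (length ms) (\<lambda>(i, j). Poly_Mapping.lookup (ps ! i) (ms ! j))"

definition lead_monos_ge :: "mono list \<Rightarrow> 'a::field mat \<Rightarrow> mono set" where
  "lead_monos_ge ms A =
     (let G = gauss_jordan_single A in
      {ms ! j | i j. i < dim_row G \<and> j < dim_col G \<and> G $$ (i, j) \<noteq> 0 \<and>
                     (\<forall>j' < j. G $$ (i, j') = 0)})"

(* rows of M3H({f_1,...,f_k}, e, lt); degree of f_s is D s *)
fun m3h_rows :: "(nat \<Rightarrow> nat) \<Rightarrow> nat \<Rightarrow> (mono \<Rightarrow> mono \<Rightarrow> bool) \<Rightarrow> (nat \<Rightarrow> 'a::field mpoly)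
    \<Rightarrow> (nat \<Rightarrow> nat \<Rightarrow> int) \<Rightarrow> nat \<Rightarrow> (nat \<Rightarrow> int) \<Rightarrow> 'a mpoly list" where
  "m3h_rows n r lt f D 0 e = []"
| "m3h_rows n r lt f D (Suc k) e =
     (let e' = (\<lambda>i. e i - D (Suc k) i);
          ms' = dec_list lt (Mon n r e');
          L = lead_monos_ge ms' (macaulay ms' (m3h_rows n r lt f D k e'))
      in m3h_rows n r lt f D k e @
         map (\<lambda>\<beta>. Poly_Mapping.single \<beta> 1 * f (Suc k))
             (filter (\<lambda>\<beta>. \<beta> \<notin> L) (dec_list lt (Mon n r e'))))"

definition M3H :: "(nat \<Rightarrow> nat) \<Rightarrow> nat \<Rightarrow> (mono \<Rightarrow> mono \<Rightarrow> bool) \<Rightarrow> (nat \<Rightarrow> 'a::field mpoly)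
    \<Rightarrow> (nat \<Rightarrow> nat \<Rightarrow> int) \<Rightarrow> nat \<Rightarrow> (nat \<Rightarrow> int) \<Rightarrow> 'a mat" where
  "M3H n r lt f D k e = macaulay (dec_list lt (Mon n r e)) (m3h_rows n r lt f D k e)"

(* [H_1(K(f_1,...,f_s; K[x]))]_e = 0, written out: every degree-e syzygy of the
   Koszul differential d_1(e_l) = f_l lies in the image of d_2,
   d_2(e_i \<and> e_j) = f_i e_j - f_j e_i (i<j), where e_l has degree D l. *)
definition H1_vanishes :: "(nat \<Rightarrow> nat) \<Rightarrow> nat \<Rightarrow> (nat \<Rightarrow> 'a::field mpoly)
    \<Rightarrow> (nat \<Rightarrow> nat \<Rightarrow> int) \<Rightarrow> nat \<Rightarrow> (nat \<Rightarrow> int) \<Rightarrow> bool" where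
  "H1_vanishes n r f D s e \<longleftrightarrow>
     (\<forall>g :: nat \<Rightarrow> 'a mpoly.
        (\<forall>l\<in>{1..s}. homog n r (\<lambda>i. e i - D l i) (g l)) \<and> (\<Sum>l=1..s. g l * f l) = 0 \<longrightarrow>
        (\<exists>h :: nat \<Rightarrow> nat \<Rightarrow> 'a mpoly.
           (\<forall>i j. 1 \<le> i \<and> i < j \<and> j \<le> s \<longrightarrow> homog n r (\<lambda>t. e t - D i t - D j t) (h i j)) \<and>
           (\<forall>l\<in>{1..s}. g l = (\<Sum>i=1..<l. h i l * f i) - (\<Sum>j=Suc l..s. h l j * f j))))"

definition full_rank :: "'a::field mat \<Rightarrow> bool" where
  "full_rank A \<longleftrightarrow> vec_space.rank (dim_row A) A = min (dim_row A) (dim_col A)"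

end

theory Submission
  imports Defs
begin

section \<open>Order facts\<close>

lemma mo_irrefl: "monomial_order n r lt \<Longrightarrow> is_mono n r a \<Longrightarrow> \<not> lt a a"
  unfolding monomial_order_def by blast
lemma mo_trans: "monomial_order n r lt \<Longrightarrow> is_mono n r a \<Longrightarrow> is_mono n r b \<Longrightarrow> is_mono n r c \<Longrightarrow> lt a b \<Longrightarrow> lt b c \<Longrightarrow> lt a c"
  unfolding monomial_order_def by blast
lemma mo_total: "monomial_order n r lt \<Longrightarrow> is_mono n r a \<Longrightarrow> is_mono n r b \<Longrightarrow> a \<noteq> b \<Longrightarrow> lt a b \<or> lt b a"
  unfolding monomial_order_def by blast
lemma mo_asym: "monomial_order n r lt \<Longrightarrow> is_mono n r a \<Longrightarrow> is_mono n r b \<Longrightarrow> lt a b \<Longrightarrow> \<not> lt b a"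
  using mo_irrefl mo_trans by metis

lemma exists_max:
  assumes mo: "monomial_order n r lt" and "finite A" "A \<noteq> {}" "\<forall>a\<in>A. is_mono n r a"
  shows "\<exists>b\<in>A. \<forall>a\<in>A. a \<noteq> b \<longrightarrow> lt a b"
  using assms(2-4)
proof (induction A rule: finite_ne_induct)
  case (singleton x) then show ?case by auto
next
  case (insert x F)
  then obtain m where m: "m \<in> F" "\<forall>a\<in>F. a \<noteq> m \<longrightarrow> lt a m" by auto
  show ?case
  proof (cases "lt m x")
    case True
    have "\<forall>a\<in>insert x F. a \<noteq> x \<longrightarrow> lt a x"
    proof (intro ballI impI)
      fix a assume a: "a \<in> insert x F" "a \<noteq> x"
      then have "a \<in> F" by auto
      then show "lt a x" using m True mo_trans[OF mo, of a m x] insert.prems by (cases "a = m") auto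
    qed
    then show ?thesis by auto
  next
    case False
    then have "x = m \<or> lt x m" using mo_total[OF mo, of m x] insert.prems m by auto
    then have "lt x m" using insert.hyps m by auto
    then show ?thesis using m by auto
  qed
qed

lemma sorted_unique:
  assumes mo: "monomial_order n r lt"
  shows "\<forall>a\<in>set xs. is_mono n r a \<Longrightarrow> set ys = set xs \<Longrightarrow> sorted_wrt (\<lambda>a b. lt b a) xs
     \<Longrightarrow> sorted_wrt (\<lambda>a b. lt b a) ys \<Longrightarrow> xs = ys"
proof (induction xs arbitrary: ys)
  case Nil then show ?case by auto
next
  case (Cons x xs)
  then obtain y ys' where ys: "ys = y # ys'" by (cases ys) auto
  have xy: "x = y"
  proof (rule ccontr)
    assume "x \<noteq> y"
    then have "lt y x" using Cons.prems ys by auto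
    moreover have "lt x y" using Cons.prems ys \<open>x \<noteq> y\<close> by (metis set_ConsD list.set_intros(1) sorted_wrt.simps(2))
    moreover have "is_mono n r y" using Cons.prems(1,2) ys by (metis list.set_intros(1))
    ultimately show False using mo_asym[OF mo, of x y] Cons.prems ys by auto
  qed
  have "x \<notin> set xs" using Cons.prems(1,3) mo_irrefl[OF mo] by auto
  moreover have "y \<notin> set ys'" using Cons.prems(1,2,4) mo_irrefl[OF mo] ys by (metis list.set_intros(1) sorted_wrt.simps(2))
  ultimately have "set ys' = set xs" using Cons.prems(2) ys xy by auto
  then show ?case using Cons ys xy by auto
qed

lemma sorted_exists:
  assumes mo: "monomial_order n r lt" and fin: "finite S" and S: "\<forall>a\<in>S. is_mono n r a"
  shows "\<exists>xs. set xs = S \<and> sorted_wrt (\<lambda>a b. lt b a) xs"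
  using fin S
proof (induction S rule: finite_remove_induct)
  case empty then show ?case by auto
next
  case (remove A)
  obtain m where m: "m \<in> A" "\<forall>a\<in>A. a \<noteq> m \<longrightarrow> lt a m" using exists_max[OF mo remove(1,2)] remove.prems by auto
  obtain xs where xs: "set xs = A - {m}" "sorted_wrt (\<lambda>a b. lt b a) xs" using remove.IH[OF m(1)] remove.prems by auto
  show ?case by (rule exI[of _ "m # xs"]) (use m xs in auto)
qed

lemma dec_list:
  assumes mo: "monomial_order n r lt" and fin: "finite S" and S: "\<forall>a\<in>S. is_mono n r a"
  shows "set (dec_list lt S) = S" "sorted_wrt (\<lambda>a b. lt b a) (dec_list lt S)" "distinct (dec_list lt S)"
proof -
  obtain xs where xs: "set xs = S \<and> sorted_wrt (\<lambda>a b. lt b a) xs" using sorted_exists[OF assms] by auto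
  have "\<exists>!xs. set xs = S \<and> sorted_wrt (\<lambda>a b. lt b a) xs"
    by (rule ex1I[of _ xs]) (use xs sorted_unique[OF mo] S in metis)+
  then have *: "set (dec_list lt S) = S \<and> sorted_wrt (\<lambda>a b. lt b a) (dec_list lt S)"
    unfolding dec_list_def by (rule theI')
  then show "set (dec_list lt S) = S" "sorted_wrt (\<lambda>a b. lt b a) (dec_list lt S)" by auto
  show "distinct (dec_list lt S)"
    using * S mo_irrefl[OF mo] by (metis sorted_wrt_iff_nth_less distinct_conv_nth nat_neq_iff nth_mem)
qed

section \<open>Finiteness of Mon\<close>

lemma finite_vars: "finite (vars n r)"
proof -
  have "vars n r \<subseteq> {..<r} \<times> {..Max (n ` {..<r})}"
    unfolding vars_def by (auto intro: order_trans[OF _ Max_ge])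
  then show ?thesis by (rule finite_subset) auto
qed

lemma finite_Mon: "finite (Mon n r e)"
proof -
  define B where "B = Max ((\<lambda>i. nat (e i)) ` {..<r})"
  define V where "V = vars n r"
  have V: "finite V" unfolding V_def by (rule finite_vars)
  have inj: "inj_on (\<lambda>m. restrict (Poly_Mapping.lookup m) V) (Mon n r e)"
  proof (rule inj_onI)
    fix a b assume a: "a \<in> Mon n r e" and b: "b \<in> Mon n r e"
      and eq: "restrict (Poly_Mapping.lookup a) V = restrict (Poly_Mapping.lookup b) V"
    show "a = b"
    proof (rule poly_mapping_eqI)
      fix x show "Poly_Mapping.lookup a x = Poly_Mapping.lookup b x"
      proof (cases "x \<in> V")
        case True then show ?thesis using eq by (metis restrict_apply')
      next
        case False
        then have "x \<notin> Poly_Mapping.keys a" "x \<notin> Poly_Mapping.keys b"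
          using a b unfolding Mon_def is_mono_def V_def by auto
        then show ?thesis by (simp add: in_keys_iff)
      qed
    qed
  qed
  have sub: "(\<lambda>m. restrict (Poly_Mapping.lookup m) V) ` Mon n r e \<subseteq> PiE V (\<lambda>_. {..B})"
  proof
    fix h assume "h \<in> (\<lambda>m. restrict (Poly_Mapping.lookup m) V) ` Mon n r e"
    then obtain m where m: "m \<in> Mon n r e" and h: "h = restrict (Poly_Mapping.lookup m) V" by auto
    have "Poly_Mapping.lookup m x \<le> B" if x: "x \<in> V" for x
    proof -
      obtain i j where ij: "x = (i, j)" "i < r" "j \<le> n i" using x unfolding V_def vars_def by auto
      have "Poly_Mapping.lookup m (i, j) \<le> (\<Sum>j\<le>n i. Poly_Mapping.lookup m (i, j))"
        using ij by (intro member_le_sum) auto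
      also have "mdeg n m i = e i" using m ij unfolding Mon_def by auto
      then have "int (\<Sum>j\<le>n i. Poly_Mapping.lookup m (i, j)) = e i" unfolding mdeg_def .
      then have "(\<Sum>j\<le>n i. Poly_Mapping.lookup m (i, j)) = nat (e i)" by linarith
      also have "nat (e i) \<le> B" unfolding B_def using ij by (intro Max_ge) auto
      finally show ?thesis using ij by simp
    qed
    then show "h \<in> PiE V (\<lambda>_. {..B})" unfolding h by auto
  qed
  have "finite (PiE V (\<lambda>_. {..B}))" using V by (intro finite_PiE) auto
  then show ?thesis using sub inj finite_imageD finite_subset by metis
qed

lemma Mon_is_mono: "m \<in> Mon n r e \<Longrightarrow> is_mono n r m"
  unfolding Mon_def by auto

definition smul :: "'a::field \<Rightarrow> 'a mpoly \<Rightarrow> 'a mpoly" where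
  "smul c p = Poly_Mapping.single 0 c * p"

lemma lookup_smul [simp]: "Poly_Mapping.lookup (smul c p) x = c * Poly_Mapping.lookup p x"
  unfolding smul_def mult_map_scale_conv_mult[symmetric] by transfer (auto simp: when_def)

lemma keys_smul: "Poly_Mapping.keys (smul c p) \<subseteq> Poly_Mapping.keys p"
  by (auto simp: in_keys_iff)

lemma smul_add: "smul c (p + q) = smul c p + smul c q"
  by (rule poly_mapping_eqI) (simp add: lookup_add algebra_simps)
lemma smul_smul: "smul a (smul b p) = smul (a * b) p"
  by (rule poly_mapping_eqI) (simp add: algebra_simps)
lemma smul_mult: "smul c (p * q) = smul c p * q"
  unfolding smul_def by (simp add: mult.assoc)
lemma smul_one [simp]: "smul 1 p = p"
  by (rule poly_mapping_eqI) simp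
lemma smul_zero [simp]: "smul 0 p = 0"
  by (rule poly_mapping_eqI) simp
lemma smul_zero2 [simp]: "smul c 0 = 0"
  by (rule poly_mapping_eqI) simp
lemma smul_minus: "smul (-1) p = - p"
  by (rule poly_mapping_eqI) simp
lemma smul_sum: "smul c (sum g A) = (\<Sum>a\<in>A. smul c (g a))"
  by (rule poly_mapping_eqI) (simp add: lookup_sum sum_distrib_left)
lemma smul_single: "smul c (Poly_Mapping.single b a) = Poly_Mapping.single b (c * a)"
  unfolding smul_def by (simp add: mult_single)

definition lc :: "(nat \<Rightarrow> 'a::field) \<Rightarrow> 'a mpoly list \<Rightarrow> 'a mpoly" where
  "lc c ps = (\<Sum>i<length ps. smul (c i) (ps ! i))"

lemma lookup_lc: "Poly_Mapping.lookup (lc c ps) x = (\<Sum>i<length ps. c i * Poly_Mapping.lookup (ps ! i) x)"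
  unfolding lc_def by (simp add: lookup_sum)

lemma keys_lc: "Poly_Mapping.keys (lc c ps) \<subseteq> (\<Union>p\<in>set ps. Poly_Mapping.keys p)"
proof
  fix x assume "x \<in> Poly_Mapping.keys (lc c ps)"
  then have "(\<Sum>i<length ps. c i * Poly_Mapping.lookup (ps ! i) x) \<noteq> 0" by (simp add: in_keys_iff lookup_lc)
  then obtain i where "i < length ps" "Poly_Mapping.lookup (ps ! i) x \<noteq> 0"
    by (metis (no_types, lifting) lessThan_iff mult_zero_right sum.neutral)
  then show "x \<in> (\<Union>p\<in>set ps. Poly_Mapping.keys p)" by (auto simp: in_keys_iff)
qed

lemma sum_lessThan_add_split: "(\<Sum>i<a + b. g i) = (\<Sum>i<a. g i) + (\<Sum>i<b. g (a + i))" for g :: "nat \<Rightarrow> 'b::comm_monoid_add"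
proof -
  have eq: "{..<a + b} = {..<a} \<union> {a..<a + b}" by auto
  have 1: "sum g {..<a + b} = sum g {..<a} + sum g {a..<a + b}"
    unfolding eq by (rule sum.union_disjoint) auto
  have 2: "sum g {a..<a + b} = (\<Sum>i<b. g (a + i))"
    using sum.atLeastLessThan_shift_bounds[of g 0 a b] by (simp add: atLeast0LessThan comp_def add.commute)
  show ?thesis using 1 2 by simp
qed

lemma lc_append: "lc c (xs @ ys) = lc c xs + lc (\<lambda>i. c (length xs + i)) ys"
  unfolding lc_def length_append sum_lessThan_add_split
  by (intro arg_cong2[where f="(+)"] sum.cong) (auto simp: nth_append)

inductive inspan :: "'a::field mpoly set \<Rightarrow> 'a mpoly \<Rightarrow> bool" for S where
  span_zero: "inspan S 0"
| span_base: "p \<in> S \<Longrightarrow> inspan S p"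
| span_add: "inspan S p \<Longrightarrow> inspan S q \<Longrightarrow> inspan S (p + q)"
| span_smul: "inspan S p \<Longrightarrow> inspan S (smul c p)"

lemma span_sum: "finite A \<Longrightarrow> (\<And>a. a \<in> A \<Longrightarrow> inspan S (g a)) \<Longrightarrow> inspan S (sum g A)"
  by (induction A rule: finite_induct) (auto intro: inspan.intros)

lemma span_diff: "inspan S p \<Longrightarrow> inspan S q \<Longrightarrow> inspan S (p - q)"
  using span_add[OF _ span_smul[of S q "-1"]] by (simp add: smul_minus)

lemma span_mono: "inspan S p \<Longrightarrow> S \<subseteq> T \<Longrightarrow> inspan T p"
  by (induction rule: inspan.induct) (auto intro: inspan.intros)

lemma span_lc: "inspan (set ps) (lc c ps)"
  unfolding lc_def by (intro span_sum span_smul span_base) auto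

lemma span_closed:
  assumes "inspan S p" "S \<subseteq> T" "0 \<in> T" "\<And>a b. a \<in> T \<Longrightarrow> b \<in> T \<Longrightarrow> a + b \<in> T"
    "\<And>a c. a \<in> T \<Longrightarrow> smul c a \<in> T"
  shows "p \<in> T"
  using assms by (induction rule: inspan.induct) auto

lemma span_lcE:
  assumes "inspan (set ps) p" shows "\<exists>c. p = lc c ps"
  using assms
proof (induction rule: inspan.induct)
  case span_zero
  show ?case by (rule exI[of _ "\<lambda>_. 0"]) (simp add: lc_def)
next
  case (span_base p)
  then obtain i where i: "i < length ps" "p = ps ! i" by (auto simp: in_set_conv_nth)
  have "lc (\<lambda>j. if j = i then 1 else 0) ps = p"
  proof (rule poly_mapping_eqI)
    fix x
    have "(\<Sum>j<length ps. (if j = i then 1 else 0) * Poly_Mapping.lookup (ps ! j) x) =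
          (\<Sum>j<length ps. if j = i then Poly_Mapping.lookup (ps ! j) x else 0)"
      by (rule sum.cong) auto
    also have "\<dots> = Poly_Mapping.lookup p x" using i by (simp add: sum.delta)
    finally show "Poly_Mapping.lookup (lc (\<lambda>j. if j = i then 1 else 0) ps) x = Poly_Mapping.lookup p x"
      by (simp add: lookup_lc)
  qed
  then show ?case by metis
next
  case (span_add p q)
  then obtain c1 c2 where "p = lc c1 ps" "q = lc c2 ps" by auto
  then have "p + q = lc (\<lambda>i. c1 i + c2 i) ps"
    by (intro poly_mapping_eqI) (simp add: lookup_add lookup_lc sum.distrib algebra_simps)
  then show ?case by metis
next
  case (span_smul p c)
  then obtain c1 where "p = lc c1 ps" by auto
  then have "smul c p = lc (\<lambda>i. c * c1 i) ps"
    by (intro poly_mapping_eqI) (simp add: lookup_lc sum_distrib_left algebra_simps)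
  then show ?case by metis
qed

section \<open>Homogeneity\<close>

lemma homog_eq: "(\<And>i. i < r \<Longrightarrow> a i = b i) \<Longrightarrow> homog n r a p \<Longrightarrow> homog n r b p"
  unfolding homog_def Mon_def by auto

lemma homog_zero [simp]: "homog n r e 0"
  unfolding homog_def by simp

lemma homog_add: "homog n r e p \<Longrightarrow> homog n r e q \<Longrightarrow> homog n r e (p + q)"
  using keys_add[of p q] unfolding homog_def by (meson Un_least order_trans)

lemma homog_smul: "homog n r e p \<Longrightarrow> homog n r e (smul c p)"
  using keys_smul[of c p] unfolding homog_def by (meson order_trans)

lemma homog_sum: "(\<And>a. a \<in> A \<Longrightarrow> homog n r e (g a)) \<Longrightarrow> homog n r e (sum g A)"
proof (induction A rule: infinite_finite_induct)
  case (insert x F)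
  then show ?case by (simp add: homog_add)
qed simp_all

lemma homog_keys: "homog n r e p \<Longrightarrow> x \<in> Poly_Mapping.keys p \<Longrightarrow> x \<in> Mon n r e"
  unfolding homog_def by auto

lemma homog_single: "b \<in> Mon n r e \<Longrightarrow> homog n r e (Poly_Mapping.single b c)"
  unfolding homog_def by auto

lemma Mon_add: "x \<in> Mon n r a \<Longrightarrow> y \<in> Mon n r b \<Longrightarrow> x + y \<in> Mon n r (\<lambda>i. a i + b i)"
proof -
  assume x: "x \<in> Mon n r a" and y: "y \<in> Mon n r b"
  have "Poly_Mapping.keys (x + y) \<subseteq> Poly_Mapping.keys x \<union> Poly_Mapping.keys y" by (rule keys_add)
  then have "is_mono n r (x + y)" using x y unfolding Mon_def is_mono_def by auto
  moreover have "mdeg n (x + y) i = mdeg n x i + mdeg n y i" for i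
    unfolding mdeg_def by (simp add: lookup_add sum.distrib)
  ultimately show ?thesis using x y unfolding Mon_def by auto
qed

lemma homog_mult: "homog n r a p \<Longrightarrow> homog n r b q \<Longrightarrow> homog n r (\<lambda>i. a i + b i) (p * q)"
proof -
  assume hp: "homog n r a p" and hq: "homog n r b q"
  show ?thesis unfolding homog_def
  proof
    fix x assume "x \<in> Poly_Mapping.keys (p * q)"
    then obtain u v where uv: "u \<in> Poly_Mapping.keys p" "v \<in> Poly_Mapping.keys q" "x = u + v"
      using keys_mult[of p q] by blast
    show "x \<in> Mon n r (\<lambda>i. a i + b i)"
      unfolding uv(3) using Mon_add[OF homog_keys[OF hp uv(1)] homog_keys[OF hq uv(2)]] .
  qed
qed

lemma pivot_facts:
  assumes pf: "pivot_fun G f nc" and dr: "dim_row G = nr" and i: "i < nr"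
  shows "f i \<le> nc"
    "f i < nc \<Longrightarrow> G $$ (i, f i) = 1"
    "f i < nc \<Longrightarrow> i' < nr \<Longrightarrow> i' \<noteq> i \<Longrightarrow> G $$ (i', f i) = 0"
    "j < f i \<Longrightarrow> G $$ (i, j) = 0"
    "Suc i < nr \<Longrightarrow> f (Suc i) > f i \<or> f (Suc i) = nc"
  using pf dr i unfolding pivot_fun_def Let_def by auto

lemma pivot_mono:
  assumes pf: "pivot_fun G f nc" and dr: "dim_row G = nr"
  shows "l1 < l2 \<Longrightarrow> l2 < nr \<Longrightarrow> f l2 < nc \<Longrightarrow> f l1 < f l2"
proof (induction l2)
  case 0 then show ?case by simp
next
  case (Suc m)
  have "f (Suc m) > f m \<or> f (Suc m) = nc" using pivot_facts(5)[OF pf dr, of m] Suc.prems by simp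
  then have fm: "f m < f (Suc m)" using Suc.prems by auto
  show ?case
  proof (cases "l1 = m")
    case True then show ?thesis using fm by simp
  next
    case False
    then have "f l1 < f m" using Suc.IH Suc.prems fm by auto
    then show ?thesis using fm by simp
  qed
qed

lemma gj_obtain:
  assumes A: "A \<in> carrier_mat nr nc"
  obtains P Q f where "gauss_jordan_single A \<in> carrier_mat nr nc"
    "gauss_jordan_single A = P * A" "P \<in> carrier_mat nr nr" "Q \<in> carrier_mat nr nr"
    "P * Q = 1\<^sub>m nr" "Q * P = 1\<^sub>m nr" "A = Q * gauss_jordan_single A"
    "pivot_fun (gauss_jordan_single A) f nc"
proof -
  define G where "G = gauss_jordan_single A"
  note gj = gauss_jordan_single[OF A G_def[symmetric]]
  obtain P Q where PQ: "G = P * A" "P \<in> carrier_mat nr nr" "Q \<in> carrier_mat nr nr"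
    "P * Q = 1\<^sub>m nr" "Q * P = 1\<^sub>m nr" using gj(4) by blast
  have "Q * G = Q * (P * A)" using PQ(1) by simp
  also have "\<dots> = (Q * P) * A" using assoc_mult_mat[OF PQ(3) PQ(2) A] by simp
  also have "\<dots> = A" using PQ(5) A by simp
  finally have AQG: "A = Q * G" by simp
  obtain f where "pivot_fun G f (dim_col G)" using gj(3) unfolding row_echelon_form_def by blast
  then have "pivot_fun G f nc" using gj(2) by simp
  then show ?thesis using that[of P Q f] PQ AQG gj(2) unfolding G_def by blast
qed

lemma entry_prod:
  assumes "Q \<in> carrier_mat nr nr" "G \<in> carrier_mat nr nc" "i < nr" "j < nc"
  shows "(Q * G) $$ (i, j) = (\<Sum>l<nr. Q $$ (i, l) * G $$ (l, j))"
  using assms by (simp add: scalar_prod_def atLeast0LessThan)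

lemma gj_lead:
  assumes A: "A \<in> carrier_mat nr nc" and j0: "j0 < nc"
    and nz: "(\<Sum>i<nr. c i * A $$ (i, j0)) \<noteq> 0"
    and z: "\<forall>j<j0. (\<Sum>i<nr. c i * A $$ (i, j)) = 0"
  shows "\<exists>i<nr. gauss_jordan_single A $$ (i, j0) \<noteq> 0 \<and> (\<forall>j'<j0. gauss_jordan_single A $$ (i, j') = 0)"
proof -
  define G where "G = gauss_jordan_single A"
  obtain P Q f where G: "G \<in> carrier_mat nr nc" and Q: "Q \<in> carrier_mat nr nr"
    and AQG: "A = Q * G" and pf: "pivot_fun G f nc"
    using gj_obtain[OF A] unfolding G_def[symmetric] by metis
  have dr: "dim_row G = nr" using G by simp
  define c' where "c' l = (\<Sum>i<nr. c i * Q $$ (i, l))" for l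
  have v: "(\<Sum>i<nr. c i * A $$ (i, j)) = (\<Sum>l<nr. c' l * G $$ (l, j))" if j: "j < nc" for j
  proof -
    have "(\<Sum>i<nr. c i * A $$ (i, j)) = (\<Sum>i<nr. c i * (\<Sum>l<nr. Q $$ (i, l) * G $$ (l, j)))"
      using entry_prod[OF Q G _ j] AQG by simp
    also have "\<dots> = (\<Sum>i<nr. \<Sum>l<nr. c i * Q $$ (i, l) * G $$ (l, j))"
      by (simp add: sum_distrib_left mult.assoc)
    also have "\<dots> = (\<Sum>l<nr. \<Sum>i<nr. c i * Q $$ (i, l) * G $$ (l, j))"
      by (rule sum.swap)
    also have "\<dots> = (\<Sum>l<nr. c' l * G $$ (l, j))"
      unfolding c'_def by (simp add: sum_distrib_right)
    finally show ?thesis .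
  qed
  define S where "S = {l. l < nr \<and> c' l \<noteq> 0 \<and> f l < nc}"
  have Sne: "S \<noteq> {}"
  proof
    assume "S = {}"
    then have "c' l * G $$ (l, j0) = 0" if "l < nr" for l
    proof (cases "c' l = 0")
      case False
      then have "\<not> f l < nc" using \<open>S = {}\<close> that unfolding S_def by auto
      then have "j0 < f l" using j0 by simp
      then show ?thesis using pivot_facts(4)[OF pf dr that] by simp
    qed simp
    then have "(\<Sum>l<nr. c' l * G $$ (l, j0)) = 0" by (intro sum.neutral) auto
    then show False using nz v[OF j0] by simp
  qed
  have finS: "finite S" unfolding S_def by auto
  define m where "m = Min S"
  have mS: "m \<in> S" unfolding m_def using Min_in[OF finS Sne] .
  have mle: "\<And>l. l \<in> S \<Longrightarrow> m \<le> l" unfolding m_def using Min_le[OF finS] by auto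
  have m: "m < nr" "c' m \<noteq> 0" "f m < nc" using mS unfolding S_def by auto
  have before: "(\<Sum>l<nr. c' l * G $$ (l, j)) = 0" if j: "j < f m" for j
  proof -
    have "c' l * G $$ (l, j) = 0" if l: "l < nr" for l
    proof (cases "c' l = 0")
      case False
      show ?thesis
      proof (cases "f l < nc")
        case False
        then have "j < f l" using j m(3) by simp
        then show ?thesis using pivot_facts(4)[OF pf dr l] by simp
      next
        case True
        then have "l \<in> S" using l \<open>c' l \<noteq> 0\<close> unfolding S_def by auto
        then have "m \<le> l" by (rule mle)
        then have "f m \<le> f l"
          using pivot_mono[OF pf dr, of m l] l True by (cases "m = l") auto
        then have "j < f l" using j by simp
        then show ?thesis using pivot_facts(4)[OF pf dr l] by simp
      qed
    qed simp
    then show ?thesis by (intro sum.neutral) auto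
  qed
  have at: "(\<Sum>l<nr. c' l * G $$ (l, f m)) = c' m"
  proof -
    have "(\<Sum>l<nr. c' l * G $$ (l, f m)) = (\<Sum>l<nr. if l = m then c' m else 0)"
      by (rule sum.cong) (use pivot_facts(2,3)[OF pf dr m(1) m(3)] in auto)
    also have "\<dots> = c' m" using m(1) by simp
    finally show ?thesis .
  qed
  have "j0 = f m"
  proof (rule ccontr)
    assume "j0 \<noteq> f m"
    then consider "j0 < f m" | "f m < j0" by linarith
    then show False
    proof cases
      case 1 then show False using before[OF 1] nz v[OF j0] by simp
    next
      case 2 then show False using z at m v[OF m(3)] by auto
    qed
  qed
  then show ?thesis unfolding G_def[symmetric]
    using m pivot_facts(2,4)[OF pf dr m(1)] by (intro exI[of _ m]) auto
qed

lemma (in vec_space) rank_le_nr: assumes "A \<in> carrier_mat n nc" shows "rank A \<le> n"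
proof -
  have "set (cols A) \<subseteq> carrier_vec n" using assms cols_dim by blast
  then show ?thesis unfolding rank_def
    using subspace_dim[OF span_is_subspace fin_dim fin_dim_span_cols[OF assms]] dim_is_n by auto
qed

lemma gj_rank:
  fixes A :: "'a::field mat"
  assumes A: "A \<in> carrier_mat nr nc"
    and indep: "\<And>c. (\<forall>j<nc. (\<Sum>i<nr. c i * A $$ (i, j)) = 0) \<Longrightarrow> \<forall>i<nr. c i = 0"
  shows "vec_space.rank nr A = min nr nc"
proof -
  define G where "G = gauss_jordan_single A"
  obtain P Q f where G: "G \<in> carrier_mat nr nc" and GPA: "G = P * A" and P: "P \<in> carrier_mat nr nr"
    and Q: "Q \<in> carrier_mat nr nr" and PQ: "P * Q = 1\<^sub>m nr"
    and AQG: "A = Q * G" and pf: "pivot_fun G f nc"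
    using gj_obtain[OF A] unfolding G_def[symmetric] by metis
  have dr: "dim_row G = nr" using G by simp
  have PQe: "(\<Sum>l<nr. P $$ (i, l) * Q $$ (l, j)) = (if i = j then 1 else 0)" if "i < nr" "j < nr" for i j
    using entry_prod[OF P Q that] PQ that by simp
  have fl: "f i < nc" if i: "i < nr" for i
  proof (rule ccontr)
    assume "\<not> f i < nc"
    then have "f i = nc" using pivot_facts(1)[OF pf dr i] by simp
    then have "G $$ (i, j) = 0" if "j < nc" for j using pivot_facts(4)[OF pf dr i] that by simp
    then have "\<forall>j<nc. (\<Sum>l<nr. P $$ (i, l) * A $$ (l, j)) = 0"
      using entry_prod[OF P A i] GPA by auto
    then have "\<forall>l<nr. P $$ (i, l) = 0" using indep[of "\<lambda>l. P $$ (i, l)"] by simp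
    then have "(\<Sum>l<nr. P $$ (i, l) * Q $$ (l, i)) = 0" by simp
    then show False using PQe[OF i i] by simp
  qed
  have colA: "col A (f i) = col Q i" if i: "i < nr" for i
  proof (rule eq_vecI)
    show "dim_vec (col A (f i)) = dim_vec (col Q i)" using A Q by simp
    fix k assume "k < dim_vec (col Q i)"
    then have k: "k < nr" using Q by simp
    have "A $$ (k, f i) = (\<Sum>l<nr. Q $$ (k, l) * G $$ (l, f i))"
      using entry_prod[OF Q G k fl[OF i]] AQG by simp
    also have "\<dots> = (\<Sum>l<nr. if l = i then Q $$ (k, i) else 0)"
      by (rule sum.cong) (use pivot_facts(2,3)[OF pf dr i fl[OF i]] in auto)
    also have "\<dots> = Q $$ (k, i)" using i by simp
    finally show "col A (f i) $ k = col Q i $ k" using k A Q fl[OF i] i by simp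
  qed
  have sub: "set (cols Q) \<subseteq> set (cols A)"
  proof
    fix x assume "x \<in> set (cols Q)"
    then obtain i where i: "i < nr" "x = col Q i" using Q by (auto simp: in_set_conv_nth)
    then have x: "x = col A (f i)" using colA by simp
    have "f i < length (cols A)" using fl[OF i(1)] A by simp
    then have "cols A ! (f i) \<in> set (cols A)" by (rule nth_mem)
    then show "x \<in> set (cols A)" using x fl[OF i(1)] A by simp
  qed
  have dist: "distinct (cols Q)"
  proof (rule ccontr)
    assume "\<not> distinct (cols Q)"
    then obtain i j where ij: "i \<noteq> j" "i < nr" "j < nr" "cols Q ! i = cols Q ! j"
      using Q by (auto simp: distinct_conv_nth)
    then have "Q $$ (l, i) = Q $$ (l, j)" if "l < nr" for l
      using Q that by (metis carrier_matD(1,2) cols_nth index_col)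
    then have "(\<Sum>l<nr. P $$ (i, l) * Q $$ (l, i)) = (\<Sum>l<nr. P $$ (i, l) * Q $$ (l, j))" by simp
    then show False using PQe[of i i] PQe[of i j] ij by simp
  qed
  interpret vs: vec_space "TYPE('a)" nr .
  have li: "vs.lin_indpt (set (cols Q))"
  proof
    assume "vs.lin_dep (set (cols Q))"
    then obtain v where v: "v \<in> carrier_vec nr" "v \<noteq> 0\<^sub>v nr" "Q *\<^sub>v v = 0\<^sub>v nr"
      using vs.lin_depE[OF Q _ dist] by blast
    have "v = (P * Q) *\<^sub>v v" using PQ v by simp
    also have "\<dots> = P *\<^sub>v (Q *\<^sub>v v)" using P Q v by simp
    also have "\<dots> = 0\<^sub>v nr" unfolding v(3) using P by (intro eq_vecI) (auto simp: scalar_prod_def)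
    finally show False using v by simp
  qed
  have "card (set (cols Q)) = nr" using dist Q by (simp add: distinct_card)
  then have ge: "vs.rank A \<ge> nr" using vs.rank_ge_card_indpt[OF A sub li] by simp
  have le1: "vs.rank A \<le> nr" by (rule vs.rank_le_nr[OF A])
  have le2: "vs.rank A \<le> nc" by (rule vs.rank_le_nc[OF A])
  show ?thesis using ge le1 le2 by simp
qed

lemma expand_poly: "p = (\<Sum>x\<in>Poly_Mapping.keys p. Poly_Mapping.single x (Poly_Mapping.lookup p x))"
proof (rule poly_mapping_eqI)
  fix y
  have "Poly_Mapping.lookup (\<Sum>x\<in>Poly_Mapping.keys p. Poly_Mapping.single x (Poly_Mapping.lookup p x)) y
      = (\<Sum>x\<in>Poly_Mapping.keys p. if x = y then Poly_Mapping.lookup p x else 0)"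
    by (simp add: lookup_sum lookup_single when_def)
  also have "\<dots> = Poly_Mapping.lookup p y" by (simp add: sum.delta' in_keys_iff)
  finally show "Poly_Mapping.lookup p y = Poly_Mapping.lookup (\<Sum>x\<in>Poly_Mapping.keys p. Poly_Mapping.single x (Poly_Mapping.lookup p x)) y" by simp
qed

lemma single_mult_smul: "Poly_Mapping.single x c * h = smul c (Poly_Mapping.single x 1 * h)"
  unfolding smul_def by (simp add: mult.assoc[symmetric] mult_single)

lemma expand_mult: "p * h = (\<Sum>x\<in>Poly_Mapping.keys p. smul (Poly_Mapping.lookup p x) (Poly_Mapping.single x 1 * h))"
proof -
  have "p * h = (\<Sum>x\<in>Poly_Mapping.keys p. Poly_Mapping.single x (Poly_Mapping.lookup p x)) * h"
    by (subst expand_poly[of p]) (rule refl)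
  also have "\<dots> = (\<Sum>x\<in>Poly_Mapping.keys p. Poly_Mapping.single x (Poly_Mapping.lookup p x) * h)"
    by (simp add: sum_distrib_right)
  also have "\<dots> = (\<Sum>x\<in>Poly_Mapping.keys p. smul (Poly_Mapping.lookup p x) (Poly_Mapping.single x 1 * h))"
    by (rule sum.cong[OF refl], rule single_mult_smul)
  finally show ?thesis .
qed

section \<open>The ideal part\<close>

definition Iset :: "(nat \<Rightarrow> nat) \<Rightarrow> nat \<Rightarrow> (nat \<Rightarrow> 'a::field mpoly) \<Rightarrow> (nat \<Rightarrow> nat \<Rightarrow> int) \<Rightarrow> nat \<Rightarrow> (nat \<Rightarrow> int) \<Rightarrow> 'a mpoly set" where
  "Iset n r f D k e = {p. \<exists>g. (\<forall>s\<in>{1..k}. homog n r (\<lambda>i. e i - D s i) (g s)) \<and> p = (\<Sum>s=1..k. g s * f s)}"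

lemma IsetI: "(\<And>s. s \<in> {1..k} \<Longrightarrow> homog n r (\<lambda>i. e i - D s i) (g s)) \<Longrightarrow> p = (\<Sum>s=1..k. g s * f s) \<Longrightarrow> p \<in> Iset n r f D k e"
  unfolding Iset_def by blast

lemma Iset_zero: "0 \<in> Iset n r f D k e"
  by (rule IsetI[of _ _ _ _ _ "\<lambda>_. 0"]) auto

lemma Iset_add: "a \<in> Iset n r f D k e \<Longrightarrow> b \<in> Iset n r f D k e \<Longrightarrow> a + b \<in> Iset n r f D k e"
proof -
  assume "a \<in> Iset n r f D k e" "b \<in> Iset n r f D k e"
  then obtain g1 g2 where g1: "\<forall>s\<in>{1..k}. homog n r (\<lambda>i. e i - D s i) (g1 s)" "a = (\<Sum>s=1..k. g1 s * f s)"
    and g2: "\<forall>s\<in>{1..k}. homog n r (\<lambda>i. e i - D s i) (g2 s)" "b = (\<Sum>s=1..k. g2 s * f s)"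
    unfolding Iset_def by blast
  show ?thesis
    by (rule IsetI[of _ _ _ _ _ "\<lambda>s. g1 s + g2 s"]) (use g1 g2 in \<open>auto intro: homog_add simp: sum.distrib distrib_right\<close>)
qed

lemma Iset_smul: "a \<in> Iset n r f D k e \<Longrightarrow> smul c a \<in> Iset n r f D k e"
proof -
  assume "a \<in> Iset n r f D k e"
  then obtain g where g: "\<forall>s\<in>{1..k}. homog n r (\<lambda>i. e i - D s i) (g s)" "a = (\<Sum>s=1..k. g s * f s)"
    unfolding Iset_def by blast
  show ?thesis
    by (rule IsetI[of _ _ _ _ _ "\<lambda>s. smul c (g s)"]) (use g in \<open>auto intro: homog_smul simp: smul_sum smul_mult\<close>)
qed

lemma span_Iset: "inspan S p \<Longrightarrow> S \<subseteq> Iset n r f D k e \<Longrightarrow> p \<in> Iset n r f D k e"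
  by (erule span_closed) (auto intro: Iset_zero Iset_add Iset_smul)

lemma Iset_mult:
  assumes p: "p \<in> Iset n r f D k a" and q: "homog n r b q" and ab: "\<And>i. i < r \<Longrightarrow> e i = a i + b i"
  shows "p * q \<in> Iset n r f D k e"
proof -
  obtain g where g: "\<forall>s\<in>{1..k}. homog n r (\<lambda>i. a i - D s i) (g s)" "p = (\<Sum>s=1..k. g s * f s)"
    using p unfolding Iset_def by blast
  show ?thesis
  proof (rule IsetI[of _ _ _ _ _ "\<lambda>s. g s * q"])
    fix s assume "s \<in> {1..k}"
    then have "homog n r (\<lambda>i. (a i - D s i) + b i) (g s * q)" using g q by (intro homog_mult) auto
    then show "homog n r (\<lambda>i. e i - D s i) (g s * q)" by (rule homog_eq[rotated]) (simp add: ab)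
  next
    show "p * q = (\<Sum>s=1..k. g s * q * f s)" unfolding g(2) sum_distrib_right
      by (rule sum.cong) (simp_all add: ac_simps)
  qed
qed

lemma Iset_Suc: "p \<in> Iset n r f D k e \<Longrightarrow> p \<in> Iset n r f D (Suc k) e"
proof -
  assume "p \<in> Iset n r f D k e"
  then obtain g where g: "\<forall>s\<in>{1..k}. homog n r (\<lambda>i. e i - D s i) (g s)" "p = (\<Sum>s=1..k. g s * f s)"
    unfolding Iset_def by blast
  show ?thesis
    by (rule IsetI[of _ _ _ _ _ "\<lambda>s. if s = Suc k then 0 else g s"]) (use g in \<open>auto simp: sum.cl_ivl_Suc\<close>)
qed

lemma dec_Mon:
  assumes mo: "monomial_order n r lt"
  shows "set (dec_list lt (Mon n r e)) = Mon n r e" "sorted_wrt (\<lambda>a b. lt b a) (dec_list lt (Mon n r e))"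
    "distinct (dec_list lt (Mon n r e))"
proof -
  have "\<forall>a\<in>Mon n r e. is_mono n r a" using Mon_is_mono by blast
  note * = dec_list[OF mo finite_Mon[of n r e] this]
  show "set (dec_list lt (Mon n r e)) = Mon n r e" by (rule *(1))
  show "sorted_wrt (\<lambda>a b. lt b a) (dec_list lt (Mon n r e))" by (rule *(2))
  show "distinct (dec_list lt (Mon n r e))" by (rule *(3))
qed

lemma rows_Suc:
  "m3h_rows n r lt f D (Suc k) e =
     m3h_rows n r lt f D k e @
     map (\<lambda>\<beta>. Poly_Mapping.single \<beta> 1 * f (Suc k))
       (filter (\<lambda>\<beta>. \<beta> \<notin> lead_monos_ge (dec_list lt (Mon n r (\<lambda>i. e i - D (Suc k) i)))
            (macaulay (dec_list lt (Mon n r (\<lambda>i. e i - D (Suc k) i))) (m3h_rows n r lt f D k (\<lambda>i. e i - D (Suc k) i))))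
         (dec_list lt (Mon n r (\<lambda>i. e i - D (Suc k) i))))"
  by (simp add: Let_def)

lemma rows_homog:
  assumes mo: "monomial_order n r lt" and fh: "\<forall>s\<in>{1..k}. homog n r (D s) (f s)"
  shows "q \<in> set (m3h_rows n r lt f D k e) \<Longrightarrow> homog n r e q"
  using fh
proof (induction k arbitrary: e q)
  case 0 then show ?case by simp
next
  case (Suc k)
  show ?case
  proof (cases "q \<in> set (m3h_rows n r lt f D k e)")
    case True then show ?thesis using Suc by auto
  next
    case False
    then obtain \<beta> where b: "\<beta> \<in> Mon n r (\<lambda>i. e i - D (Suc k) i)" "q = Poly_Mapping.single \<beta> 1 * f (Suc k)"
      using Suc.prems(1) dec_Mon(1)[OF mo] unfolding rows_Suc by auto
    have "homog n r (\<lambda>i. (e i - D (Suc k) i) + D (Suc k) i) q"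
      unfolding b(2) using Suc.prems(2) b(1) by (intro homog_mult homog_single) auto
    then show ?thesis by (rule homog_eq[rotated]) simp
  qed
qed

lemma rows_Iset:
  assumes mo: "monomial_order n r lt"
  shows "q \<in> set (m3h_rows n r lt f D k e) \<Longrightarrow> q \<in> Iset n r f D k e"
proof (induction k arbitrary: e q)
  case 0 then show ?case by simp
next
  case (Suc k)
  show ?case
  proof (cases "q \<in> set (m3h_rows n r lt f D k e)")
    case True then show ?thesis using Suc by (auto intro: Iset_Suc)
  next
    case False
    then obtain \<beta> where b: "\<beta> \<in> Mon n r (\<lambda>i. e i - D (Suc k) i)" "q = Poly_Mapping.single \<beta> 1 * f (Suc k)"
      using Suc.prems(1) dec_Mon(1)[OF mo] unfolding rows_Suc by auto
    show ?thesis
      by (rule IsetI[of _ _ _ _ _ "\<lambda>s. if s = Suc k then Poly_Mapping.single \<beta> 1 else 0"])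
        (use b in \<open>auto simp: sum.cl_ivl_Suc intro: homog_single\<close>)
  qed
qed

section \<open>Leading monomials and Gaussian elimination\<close>

lemma macaulay_carrier: "macaulay ms ps \<in> carrier_mat (length ps) (length ms)"
  unfolding macaulay_def by simp

lemma macaulay_index: "i < length ps \<Longrightarrow> j < length ms \<Longrightarrow> macaulay ms ps $$ (i, j) = Poly_Mapping.lookup (ps ! i) (ms ! j)"
  unfolding macaulay_def by simp

lemma keys_span_Mon:
  assumes "\<forall>q\<in>set ps. homog n r e q" "inspan (set ps) p"
  shows "homog n r e p"
  using span_closed[OF assms(2), of "{p. homog n r e p}"] assms(1) by (auto intro: homog_add homog_smul)

lemma lead_in_L:
  assumes mo: "monomial_order n r lt"
    and ps: "\<forall>q\<in>set ps. homog n r e q"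
    and p: "inspan (set ps) p" and b: "\<beta> \<in> Poly_Mapping.keys p"
    and mx: "\<forall>\<gamma>\<in>Poly_Mapping.keys p. \<gamma> \<noteq> \<beta> \<longrightarrow> lt \<gamma> \<beta>"
  shows "\<beta> \<in> lead_monos_ge (dec_list lt (Mon n r e)) (macaulay (dec_list lt (Mon n r e)) ps)"
proof -
  define ms where "ms = dec_list lt (Mon n r e)"
  note msp = dec_Mon[OF mo, of e, folded ms_def]
  obtain c where pc: "p = lc c ps" using span_lcE[OF p] by blast
  define A where "A = macaulay ms ps"
  have A: "A \<in> carrier_mat (length ps) (length ms)" unfolding A_def by (rule macaulay_carrier)
  have hp: "homog n r e p" by (rule keys_span_Mon[OF ps p])
  have bM: "\<beta> \<in> Mon n r e" using homog_keys[OF hp b] .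
  then obtain j0 where j0: "j0 < length ms" "ms ! j0 = \<beta>" using msp(1) by (metis in_set_conv_nth)
  have lk: "(\<Sum>i<length ps. c i * A $$ (i, j)) = Poly_Mapping.lookup p (ms ! j)" if "j < length ms" for j
    unfolding pc lookup_lc A_def using that by (intro sum.cong) (auto simp: macaulay_index)
  have nz: "(\<Sum>i<length ps. c i * A $$ (i, j0)) \<noteq> 0"
    using lk[OF j0(1)] j0 b by (simp add: in_keys_iff)
  have z: "\<forall>j<j0. (\<Sum>i<length ps. c i * A $$ (i, j)) = 0"
  proof (intro allI impI)
    fix j assume j: "j < j0"
    then have jl: "j < length ms" using j0 by simp
    have "lt (ms ! j0) (ms ! j)" using sorted_wrt_nth_less[OF msp(2) j j0(1)] by simp
    moreover have mj: "ms ! j \<in> Mon n r e" using jl msp(1) nth_mem by blast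
    moreover have "ms ! j \<noteq> \<beta>" using j j0 msp(3) jl by (metis nat_neq_iff nth_eq_iff_index_eq)
    ultimately have "ms ! j \<notin> Poly_Mapping.keys p"
      using mx j0(2) mo_asym[OF mo] Mon_is_mono bM by blast
    then show "(\<Sum>i<length ps. c i * A $$ (i, j)) = 0" using lk[OF jl] by (simp add: in_keys_iff)
  qed
  obtain i where i: "i < length ps" "gauss_jordan_single A $$ (i, j0) \<noteq> 0"
    "\<forall>j'<j0. gauss_jordan_single A $$ (i, j') = 0"
    using gj_lead[OF A j0(1) nz z] by blast
  have G: "gauss_jordan_single A \<in> carrier_mat (length ps) (length ms)"
    using gauss_jordan_single(2)[OF A refl] .
  show ?thesis unfolding ms_def[symmetric] A_def[symmetric] lead_monos_ge_def Let_def
    using i j0 G by (intro CollectI exI[of _ i] exI[of _ j0]) auto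
qed

lemma lead_obtain:
  assumes mo: "monomial_order n r lt"
    and ps: "\<forall>q\<in>set ps. homog n r e q"
    and bL: "\<beta> \<in> lead_monos_ge (dec_list lt (Mon n r e)) (macaulay (dec_list lt (Mon n r e)) ps)"
  shows "\<exists>q. inspan (set ps) q \<and> Poly_Mapping.lookup q \<beta> = 1 \<and> (\<forall>\<gamma>\<in>Poly_Mapping.keys q. \<gamma> = \<beta> \<or> lt \<gamma> \<beta>)"
proof -
  define ms where "ms = dec_list lt (Mon n r e)"
  note msp = dec_Mon[OF mo, of e, folded ms_def]
  define A where "A = macaulay ms ps"
  have A: "A \<in> carrier_mat (length ps) (length ms)" unfolding A_def by (rule macaulay_carrier)
  define G where "G = gauss_jordan_single A"
  obtain P Q fp where G: "G \<in> carrier_mat (length ps) (length ms)" and GPA: "G = P * A"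
    and P: "P \<in> carrier_mat (length ps) (length ps)"
    using gj_obtain[OF A] unfolding G_def[symmetric] by metis
  obtain i j where ij: "i < length ps" "j < length ms" "G $$ (i, j) \<noteq> 0" "\<forall>j'<j. G $$ (i, j') = 0" "\<beta> = ms ! j"
    using bL G unfolding ms_def[symmetric] A_def[symmetric] G_def[symmetric] lead_monos_ge_def Let_def by auto
  define q where "q = lc (\<lambda>l. P $$ (i, l) / G $$ (i, j)) ps"
  have lq: "Poly_Mapping.lookup q (ms ! j') = G $$ (i, j') / G $$ (i, j)" if j': "j' < length ms" for j'
  proof -
    have "Poly_Mapping.lookup q (ms ! j') = (\<Sum>l<length ps. P $$ (i, l) / G $$ (i, j) * A $$ (l, j'))"
      unfolding q_def lookup_lc A_def using j' by (intro sum.cong) (auto simp: macaulay_index)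
    also have "\<dots> = (\<Sum>l<length ps. P $$ (i, l) * A $$ (l, j')) / G $$ (i, j)"
      by (simp add: sum_divide_distrib)
    also have "(\<Sum>l<length ps. P $$ (i, l) * A $$ (l, j')) = G $$ (i, j')"
      using entry_prod[OF P A ij(1) j'] GPA by simp
    finally show ?thesis .
  qed
  have "inspan (set ps) q" unfolding q_def by (rule span_lc)
  moreover have "Poly_Mapping.lookup q \<beta> = 1" using lq[OF ij(2)] ij by simp
  moreover have "\<forall>\<gamma>\<in>Poly_Mapping.keys q. \<gamma> = \<beta> \<or> lt \<gamma> \<beta>"
  proof
    fix \<gamma> assume g: "\<gamma> \<in> Poly_Mapping.keys q"
    have "homog n r e q" using keys_span_Mon[OF ps \<open>inspan (set ps) q\<close>] .
    then have "\<gamma> \<in> set ms" using homog_keys g msp(1) by blast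
    then obtain j' where j': "j' < length ms" "\<gamma> = ms ! j'" by (metis in_set_conv_nth)
    have "G $$ (i, j') \<noteq> 0" using g lq[OF j'(1)] j' by (auto simp: in_keys_iff)
    then have "\<not> j' < j" using ij(4) by auto
    then consider "j' = j" | "j < j'" by linarith
    then show "\<gamma> = \<beta> \<or> lt \<gamma> \<beta>"
    proof cases
      case 1 then show ?thesis using j' ij by simp
    next
      case 2 then show ?thesis using sorted_wrt_nth_less[OF msp(2) 2 j'(1)] j' ij by simp
    qed
  qed
  ultimately show ?thesis by blast
qed

lemma span_rows:
  assumes mo: "monomial_order n r lt"
  shows "\<forall>s\<in>{1..k}. homog n r (D s) (f s) \<Longrightarrow> p \<in> Iset n r f D k e \<Longrightarrow> inspan (set (m3h_rows n r lt f D k e)) p"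
proof (induction k arbitrary: e p)
  case 0
  then have "p = 0" unfolding Iset_def by simp
  then show ?case by (simp add: span_zero)
next
  case (Suc k)
  define K where "K = Suc k"
  define e' where "e' = (\<lambda>i. e i - D K i)"
  define ms' where "ms' = dec_list lt (Mon n r e')"
  define L where "L = lead_monos_ge ms' (macaulay ms' (m3h_rows n r lt f D k e'))"
  define R where "R = set (m3h_rows n r lt f D K e)"
  have fhk: "\<forall>s\<in>{1..k}. homog n r (D s) (f s)" using Suc.prems(1) by auto
  have fK: "homog n r (D K) (f K)" using Suc.prems(1) unfolding K_def by auto
  have IH': "\<And>e p. p \<in> Iset n r f D k e \<Longrightarrow> inspan (set (m3h_rows n r lt f D k e)) p"
    using Suc.IH fhk by blast
  have rs: "m3h_rows n r lt f D K e = m3h_rows n r lt f D k e @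
      map (\<lambda>\<beta>. Poly_Mapping.single \<beta> 1 * f K) (filter (\<lambda>\<beta>. \<beta> \<notin> L) ms')"
    unfolding K_def L_def ms'_def e'_def by (rule rows_Suc)
  have sub_old: "set (m3h_rows n r lt f D k e) \<subseteq> R" unfolding R_def rs by auto
  have new: "Poly_Mapping.single \<beta> 1 * f K \<in> R" if "\<beta> \<in> Mon n r e'" "\<beta> \<notin> L" for \<beta>
    unfolding R_def rs ms'_def using that dec_Mon(1)[OF mo, of e'] by auto
  have rh: "\<forall>q\<in>set (m3h_rows n r lt f D k e'). homog n r e' q"
    using rows_homog[OF mo fhk] by blast
  have finM: "finite (Mon n r e')" by (rule finite_Mon)
  have C: "inspan R (Poly_Mapping.single \<beta> 1 * f K)" if "\<beta> \<in> Mon n r e'" for \<beta>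
    using that
  proof (induction "card {\<gamma> \<in> Mon n r e'. lt \<gamma> \<beta>}" arbitrary: \<beta> rule: less_induct)
    case less
    show ?case
    proof (cases "\<beta> \<in> L")
      case False
      then show ?thesis using new[OF less.prems] by (rule_tac span_base) auto
    next
      case True
      obtain q where q: "inspan (set (m3h_rows n r lt f D k e')) q" "Poly_Mapping.lookup q \<beta> = 1"
        "\<forall>\<gamma>\<in>Poly_Mapping.keys q. \<gamma> = \<beta> \<or> lt \<gamma> \<beta>"
        using lead_obtain[OF mo rh True[unfolded L_def ms'_def]] by blast
      have hq: "homog n r e' q" by (rule keys_span_Mon[OF rh q(1)])
      have qI: "q \<in> Iset n r f D k e'"
        by (rule span_Iset[OF q(1)]) (use rows_Iset[OF mo] in blast)
      have "q * f K \<in> Iset n r f D k e"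
        by (rule Iset_mult[OF qI fK]) (simp add: e'_def)
      then have s2: "inspan R (q * f K)" using IH' sub_old span_mono by blast
      define t where "t = Poly_Mapping.single \<beta> 1 - q"
      have kt: "\<gamma> \<in> Mon n r e' \<and> lt \<gamma> \<beta>" if g: "\<gamma> \<in> Poly_Mapping.keys t" for \<gamma>
      proof -
        have lt_: "Poly_Mapping.lookup t \<gamma> \<noteq> 0" using g by (simp add: in_keys_iff)
        show ?thesis
        proof (cases "\<gamma> = \<beta>")
          case True
          then show ?thesis using lt_ q(2) by (simp add: t_def lookup_minus)
        next
          case False
          then have "Poly_Mapping.lookup q \<gamma> \<noteq> 0" using lt_ by (simp add: t_def lookup_minus lookup_single)
          then have gq: "\<gamma> \<in> Poly_Mapping.keys q" by (simp add: in_keys_iff)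
          then show ?thesis using q(3) False homog_keys[OF hq gq] by auto
        qed
      qed
      have s1: "inspan R (t * f K)"
      proof -
        have "inspan R (smul (Poly_Mapping.lookup t \<gamma>) (Poly_Mapping.single \<gamma> 1 * f K))"
          if g: "\<gamma> \<in> Poly_Mapping.keys t" for \<gamma>
        proof -
          have gM: "\<gamma> \<in> Mon n r e'" and gb: "lt \<gamma> \<beta>" using kt[OF g] by auto
          have "{\<delta> \<in> Mon n r e'. lt \<delta> \<gamma>} \<subset> {\<delta> \<in> Mon n r e'. lt \<delta> \<beta>}"
          proof
            show "{\<delta> \<in> Mon n r e'. lt \<delta> \<gamma>} \<subseteq> {\<delta> \<in> Mon n r e'. lt \<delta> \<beta>}"
              using mo_trans[OF mo] Mon_is_mono gM less.prems gb by blast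
            have "\<gamma> \<notin> {\<delta> \<in> Mon n r e'. lt \<delta> \<gamma>}" using mo_irrefl[OF mo] Mon_is_mono[OF gM] by auto
            moreover have "\<gamma> \<in> {\<delta> \<in> Mon n r e'. lt \<delta> \<beta>}" using gM gb by auto
            ultimately show "{\<delta> \<in> Mon n r e'. lt \<delta> \<gamma>} \<noteq> {\<delta> \<in> Mon n r e'. lt \<delta> \<beta>}" by blast
          qed
          then have "card {\<delta> \<in> Mon n r e'. lt \<delta> \<gamma>} < card {\<delta> \<in> Mon n r e'. lt \<delta> \<beta>}"
            by (rule psubset_card_mono[rotated]) (use finM in auto)
          then have "inspan R (Poly_Mapping.single \<gamma> 1 * f K)" using less.hyps gM by blast
          then show ?thesis by (rule span_smul)
        qed
        then show ?thesis unfolding expand_mult[of t] by (intro span_sum) auto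
      qed
      have "Poly_Mapping.single \<beta> 1 * f K = t * f K + q * f K"
        unfolding t_def by (simp add: algebra_simps)
      then show ?thesis using span_add[OF s1 s2] by simp
    qed
  qed
  obtain g where g: "\<forall>s\<in>{1..K}. homog n r (\<lambda>i. e i - D s i) (g s)" "p = (\<Sum>s=1..K. g s * f s)"
    using Suc.prems(2) unfolding Iset_def K_def by blast
  have p: "p = (\<Sum>s=1..k. g s * f s) + g K * f K" using g(2) unfolding K_def by simp
  have "(\<Sum>s=1..k. g s * f s) \<in> Iset n r f D k e" by (rule IsetI) (use g(1) K_def in auto)
  then have a1: "inspan R (\<Sum>s=1..k. g s * f s)" using IH' sub_old span_mono by blast
  have gK: "homog n r e' (g K)" using g(1) unfolding e'_def K_def by auto
  have a2: "inspan R (g K * f K)"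
    unfolding expand_mult[of "g K"]
    by (intro span_sum span_smul C) (use homog_keys[OF gK] in auto)
  show ?case using span_add[OF a1 a2] p unfolding R_def K_def by simp
qed

lemma indep_rows:
  assumes mo: "monomial_order n r lt"
  shows "\<forall>s\<in>{1..k}. homog n r (D s) (f s) \<Longrightarrow> \<forall>s\<in>{1..k}. H1_vanishes n r f D s d \<Longrightarrow>
    lc c (m3h_rows n r lt f D k d) = 0 \<Longrightarrow> \<forall>i<length (m3h_rows n r lt f D k d). c i = 0"
proof (induction k arbitrary: c)
  case 0 then show ?case by simp
next
  case (Suc k)
  define K where "K = Suc k"
  define e' where "e' = (\<lambda>i. d i - D K i)"
  define ms' where "ms' = dec_list lt (Mon n r e')"
  define L where "L = lead_monos_ge ms' (macaulay ms' (m3h_rows n r lt f D k e'))"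
  define R0 where "R0 = m3h_rows n r lt f D k d"
  define Bs where "Bs = filter (\<lambda>\<beta>. \<beta> \<notin> L) ms'"
  have fhk: "\<forall>s\<in>{1..k}. homog n r (D s) (f s)" using Suc.prems(1) by auto
  have Hk: "\<forall>s\<in>{1..k}. H1_vanishes n r f D s d" using Suc.prems(2) by auto
  have HK: "H1_vanishes n r f D K d" using Suc.prems(2) unfolding K_def by auto
  have rs: "m3h_rows n r lt f D K d = R0 @ map (\<lambda>\<beta>. Poly_Mapping.single \<beta> 1 * f K) Bs"
    unfolding K_def L_def ms'_def e'_def R0_def Bs_def by (rule rows_Suc)
  have BsM: "set Bs \<subseteq> Mon n r e'" unfolding Bs_def ms'_def using dec_Mon(1)[OF mo, of e'] by auto
  have BsL: "\<forall>b\<in>set Bs. b \<notin> L" unfolding Bs_def by auto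
  have Bsd: "distinct Bs" unfolding Bs_def ms'_def using dec_Mon(3)[OF mo, of e'] by simp
  define c2 where "c2 j = c (length R0 + j)" for j
  define gk where "gk = (\<Sum>j<length Bs. Poly_Mapping.single (Bs ! j) (c2 j))"
  have lc2: "lc c2 (map (\<lambda>\<beta>. Poly_Mapping.single \<beta> 1 * f K) Bs) = gk * f K"
  proof -
    have "lc c2 (map (\<lambda>\<beta>. Poly_Mapping.single \<beta> 1 * f K) Bs) =
        (\<Sum>j<length Bs. smul (c2 j) (Poly_Mapping.single (Bs ! j) 1 * f K))"
      unfolding lc_def by simp
    also have "\<dots> = (\<Sum>j<length Bs. Poly_Mapping.single (Bs ! j) (c2 j) * f K)"
      by (rule sum.cong[OF refl]) (rule single_mult_smul[symmetric])
    also have "\<dots> = gk * f K" unfolding gk_def by (simp add: sum_distrib_right)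
    finally show ?thesis .
  qed
  have lcsplit: "lc c (m3h_rows n r lt f D K d) = lc c R0 + gk * f K"
    unfolding rs lc_append lc2[symmetric] c2_def by simp
  have hg: "homog n r e' gk" unfolding gk_def
    by (intro homog_sum homog_single) (use BsM in auto)
  have "lc c R0 \<in> Iset n r f D k d"
    by (rule span_Iset[OF span_lc]) (use rows_Iset[OF mo] R0_def in blast)
  then obtain g where g: "\<forall>s\<in>{1..k}. homog n r (\<lambda>i. d i - D s i) (g s)" "lc c R0 = (\<Sum>s=1..k. g s * f s)"
    unfolding Iset_def by blast
  define G where "G s = (if s = K then gk else g s)" for s
  have sumG: "(\<Sum>s=1..K. G s * f s) = lc c R0 + gk * f K"
  proof -
    have "(\<Sum>s=1..K. G s * f s) = (\<Sum>s=1..k. G s * f s) + G K * f K" unfolding K_def by simp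
    also have "(\<Sum>s=1..k. G s * f s) = (\<Sum>s=1..k. g s * f s)"
      by (rule sum.cong) (auto simp: G_def K_def)
    finally show ?thesis using g(2) by (simp add: G_def)
  qed
  have homG: "\<forall>l\<in>{1..K}. homog n r (\<lambda>i. d i - D l i) (G l)"
    using g(1) hg unfolding G_def e'_def K_def by auto
  have zK: "lc c (m3h_rows n r lt f D K d) = 0" using Suc.prems(3) unfolding K_def .
  have "(\<Sum>l=1..K. G l * f l) = 0" using sumG lcsplit zK by simp
  then obtain h where h: "\<forall>i j. 1 \<le> i \<and> i < j \<and> j \<le> K \<longrightarrow> homog n r (\<lambda>t. d t - D i t - D j t) (h i j)"
    "\<forall>l\<in>{1..K}. G l = (\<Sum>i=1..<l. h i l * f i) - (\<Sum>j=Suc l..K. h l j * f j)"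
    using HK homG unfolding H1_vanishes_def by blast
  have "G K = (\<Sum>i=1..<K. h i K * f i) - (\<Sum>j=Suc K..K. h K j * f j)" using h(2) unfolding K_def by auto
  then have gkh: "gk = (\<Sum>i=1..k. h i K * f i)" unfolding G_def K_def
    by (simp add: atLeastLessThanSuc_atLeastAtMost)
  have "gk \<in> Iset n r f D k e'"
  proof (rule IsetI[OF _ gkh])
    fix s assume s: "s \<in> {1..k}"
    then have "homog n r (\<lambda>t. d t - D s t - D K t) (h s K)" using h(1) unfolding K_def by auto
    then show "homog n r (\<lambda>i. e' i - D s i) (h s K)" by (rule homog_eq[rotated]) (simp add: e'_def)
  qed
  then have sg: "inspan (set (m3h_rows n r lt f D k e')) gk" by (rule span_rows[OF mo fhk])
  have kg: "Poly_Mapping.keys gk \<subseteq> set Bs"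
  proof
    fix x assume "x \<in> Poly_Mapping.keys gk"
    then have "(\<Sum>j<length Bs. Poly_Mapping.lookup (Poly_Mapping.single (Bs ! j) (c2 j)) x) \<noteq> 0"
      unfolding gk_def by (simp add: in_keys_iff lookup_sum)
    then obtain j where "j < length Bs" "Poly_Mapping.lookup (Poly_Mapping.single (Bs ! j) (c2 j)) x \<noteq> 0"
      by (metis (no_types, lifting) sum.neutral lessThan_iff)
    then show "x \<in> set Bs" by (metis lookup_single_not_eq nth_mem)
  qed
  have gk0: "gk = 0"
  proof (rule ccontr)
    assume "gk \<noteq> 0"
    then have ne: "Poly_Mapping.keys gk \<noteq> {}" by simp
    have im: "\<forall>a\<in>Poly_Mapping.keys gk. is_mono n r a" using kg BsM Mon_is_mono by blast
    obtain b where b: "b \<in> Poly_Mapping.keys gk" "\<forall>a\<in>Poly_Mapping.keys gk. a \<noteq> b \<longrightarrow> lt a b"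
      using exists_max[OF mo finite_keys ne im] by blast
    have "b \<in> L" unfolding L_def ms'_def
      by (rule lead_in_L[OF mo _ sg b]) (use rows_homog[OF mo fhk] in blast)
    then show False using b(1) kg BsL by blast
  qed
  have c2z: "c2 j = 0" if j: "j < length Bs" for j
  proof -
    have "Poly_Mapping.lookup gk (Bs ! j) = (\<Sum>j'<length Bs. if j' = j then c2 j' else 0)"
      unfolding gk_def lookup_sum
      by (rule sum.cong[OF refl]) (use Bsd j in \<open>auto simp: lookup_single when_def nth_eq_iff_index_eq\<close>)
    also have "\<dots> = c2 j" using j by simp
    finally show ?thesis using gk0 by simp
  qed
  have "lc c R0 = 0" using lcsplit zK gk0 by simp
  then have c1z: "\<forall>i<length R0. c i = 0" using Suc.IH[OF fhk Hk] R0_def by blast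
  show ?case
  proof (intro allI impI)
    fix i assume "i < length (m3h_rows n r lt f D (Suc k) d)"
    then have i: "i < length R0 + length Bs" using rs unfolding K_def by simp
    show "c i = 0"
    proof (cases "i < length R0")
      case True then show ?thesis using c1z by simp
    next
      case False
      then have "c i = c2 (i - length R0)" unfolding c2_def by simp
      then show ?thesis using c2z[of "i - length R0"] i False by simp
    qed
  qed
qed

theorem mainTheorem20:
  fixes n :: "nat \<Rightarrow> nat" and r :: nat
    and f :: "nat \<Rightarrow> 'a::field_char_0 mpoly"
    and D :: "nat \<Rightarrow> nat \<Rightarrow> int"
    and k :: nat and d :: "nat \<Rightarrow> int"
    and lt :: "mono \<Rightarrow> mono \<Rightarrow> bool"
  assumes "monomial_order n r lt"
    and "\<forall>s\<in>{1..k}. homog n r (D s) (f s)"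
    and "\<forall>s\<in>{1..k}. H1_vanishes n r f D s d"
  shows "full_rank (M3H n r lt f D k d)"
proof -
  note mo = assms(1)
  define ms where "ms = dec_list lt (Mon n r d)"
  define ps where "ps = m3h_rows n r lt f D k d"
  note msp = dec_Mon[OF mo, of d, folded ms_def]
  define A where "A = macaulay ms ps"
  have A: "A \<in> carrier_mat (length ps) (length ms)" unfolding A_def by (rule macaulay_carrier)
  have rh: "\<forall>q\<in>set ps. homog n r d q" using rows_homog[OF mo assms(2)] unfolding ps_def by blast
  have indep: "\<forall>i<length ps. c i = 0"
    if c: "\<forall>j<length ms. (\<Sum>i<length ps. c i * A $$ (i, j)) = 0" for c
  proof -
    have hl: "homog n r d (lc c ps)" by (rule keys_span_Mon[OF rh span_lc])
    have "lc c ps = 0"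
    proof (rule poly_mapping_eqI)
      fix x
      show "Poly_Mapping.lookup (lc c ps) x = Poly_Mapping.lookup 0 x"
      proof (cases "x \<in> Poly_Mapping.keys (lc c ps)")
        case True
        then have "x \<in> set ms" using homog_keys[OF hl] msp(1) by blast
        then obtain j where j: "j < length ms" "x = ms ! j" by (metis in_set_conv_nth)
        have "Poly_Mapping.lookup (lc c ps) x = (\<Sum>i<length ps. c i * A $$ (i, j))"
          unfolding lookup_lc A_def j(2) using j(1) by (intro sum.cong) (auto simp: macaulay_index)
        then show ?thesis using c j(1) by simp
      next
        case False then show ?thesis by (simp add: in_keys_iff)
      qed
    qed
    then show ?thesis using indep_rows[OF mo assms(2,3)] unfolding ps_def by blast
  qed
  have "vec_space.rank (length ps) A = min (length ps) (length ms)"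
    by (rule gj_rank[OF A]) (use indep in blast)
  then show ?thesis unfolding full_rank_def M3H_def ms_def[symmetric] ps_def[symmetric] A_def[symmetric]
    using A by simp
qed

end
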